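(* Fix $p,\epsilon\in(0,1)$ and let $G$ be a graph on $n$ vertices. Let $A$ be the set of paths of length $2$ in $G$ that are not $(p,\epsilon)$-admissible. Then \[\sum_{xyz\in A}\frac1{\deg y}<\frac{3n}{2p^2\epsilon},\] where the sum is over unlabeled paths (each path $xyz=zyx$ counted once) and $\deg y$ is the degree of the middle vertex $y$ in $G$.
   Context: For a graph $G$ and a path $wuw'$ of length $2$ in $G$: choose $U\subseteq V(G)\setminus\{u\}$ by including each vertex other than $u$ independently with probability $p$, and let $A_{wuw'}$ be the event that $G$ contains a path $ww_1\cdots w_{k-1}w'$ of length $k\ge 2$ from $w$ to $w'$ with $w_1,\ldots,w_{k-1}\in U$. The path $wuw'$ is $(p,\epsilon)$-admissible if $\Pr[A_{wuw'}]\ge1-\epsilon$. *)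

theory Defs
  imports Complex_Main
begin

definition simple_graph :: "'a set \<Rightarrow> ('a \<Rightarrow> 'a \<Rightarrow> bool) \<Rightarrow> bool" where
  "simple_graph V E \<longleftrightarrow> finite V \<and> (\<forall>x y. E x y \<longrightarrow> x \<in> V \<and> y \<in> V)
     \<and> (\<forall>x y. E x y \<longrightarrow> E y x) \<and> (\<forall>x. \<not> E x x)"

definition degree :: "'a set \<Rightarrow> ('a \<Rightarrow> 'a \<Rightarrow> bool) \<Rightarrow> 'a \<Rightarrow> nat" where
  "degree V E y = card {v \<in> V. E y v}"

definition path2 :: "('a \<Rightarrow> 'a \<Rightarrow> bool) \<Rightarrow> 'a \<Rightarrow> 'a \<Rightarrow> 'a \<Rightarrow> bool" where
  "path2 E w u w' \<longleftrightarrow> w \<noteq> u \<and> u \<noteq> w' \<and> w \<noteq> w' \<and> E w u \<and> E u w'"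

text \<open>Event A_{wuw'} for a given outcome U: there is a path w w_1 ... w_{k-1} w'
(distinct vertices) of length k \<ge> 2 with all interior vertices in U.\<close>
definition event_A :: "('a \<Rightarrow> 'a \<Rightarrow> bool) \<Rightarrow> 'a \<Rightarrow> 'a \<Rightarrow> 'a set \<Rightarrow> bool" where
  "event_A E w w' U \<longleftrightarrow> (\<exists>ws. ws \<noteq> [] \<and> set ws \<subseteq> U \<and> distinct (w # ws @ [w'])
       \<and> successively E (w # ws @ [w']))"

text \<open>Probability of A_{wuw'} when U \<subseteq> V - {u} contains each vertex independently
with probability p.\<close>
definition prob_A :: "'a set \<Rightarrow> ('a \<Rightarrow> 'a \<Rightarrow> bool) \<Rightarrow> real \<Rightarrow> 'a \<Rightarrow> 'a \<Rightarrow> 'a \<Rightarrow> real" where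
  "prob_A V E p w u w' =
     (\<Sum>U\<in>{U. U \<subseteq> V - {u} \<and> event_A E w w' U}.
        p ^ card U * (1 - p) ^ card (V - {u} - U))"

definition admissible :: "'a set \<Rightarrow> ('a \<Rightarrow> 'a \<Rightarrow> bool) \<Rightarrow> real \<Rightarrow> real \<Rightarrow> 'a \<Rightarrow> 'a \<Rightarrow> 'a \<Rightarrow> bool" where
  "admissible V E p \<epsilon> w u w' \<longleftrightarrow> prob_A V E p w u w' \<ge> 1 - \<epsilon>"

text \<open>Unlabeled non-admissible paths of length 2: represented as (middle vertex, set of endpoints).\<close>
definition nonadm_paths :: "'a set \<Rightarrow> ('a \<Rightarrow> 'a \<Rightarrow> bool) \<Rightarrow> real \<Rightarrow> real \<Rightarrow> ('a \<times> 'a set) set" where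
  "nonadm_paths V E p \<epsilon> =
     {(y, {x, z}) | x y z. path2 E x y z \<and> \<not> admissible V E p \<epsilon> x y z}"

end

theory Submission
  imports Defs "HOL-Library.Transitive_Closure_Table"
begin

definition GS :: "('a \<Rightarrow> 'a \<Rightarrow> bool) \<Rightarrow> 'a set \<Rightarrow> 'a \<Rightarrow> 'a \<Rightarrow> bool" where
  "GS E S a b \<longleftrightarrow> E a b \<and> a \<in> S \<and> b \<in> S"

definition GE :: "('a \<Rightarrow> 'a \<Rightarrow> bool) \<Rightarrow> 'a set \<Rightarrow> 'a \<Rightarrow> 'a \<Rightarrow> 'a \<Rightarrow> 'a \<Rightarrow> bool" where
  "GE E S x z a b \<longleftrightarrow> GS E S a b \<and> {a, b} \<noteq> {x, z}"

lemma VS: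
  assumes "(GS E S)\<^sup>*\<^sup>* a b"
  shows "(GS E (S - {v}))\<^sup>*\<^sup>* a b \<or> b = v \<or> (\<exists>s. s \<in> S - {v} \<and> E v s \<and> (GS E (S - {v}))\<^sup>*\<^sup>* s b)"
  using assms
proof (induction rule: rtranclp_induct)
  case base
  then show ?case by simp
next
  case (step b c)
  show ?case
  proof (cases "c = v")
    case True then show ?thesis by simp
  next
    case False
    have c: "c \<in> S - {v}" "E b c" "b \<in> S" using step(2) False by (auto simp: GS_def)
    have sv: "(\<exists>s. s \<in> S - {v} \<and> E v s \<and> (GS E (S - {v}))\<^sup>*\<^sup>* s c)" if "b = v"
      using c that by auto
    from step(3) show ?thesis
    proof (elim disjE exE conjE)
      assume h: "(GS E (S - {v}))\<^sup>*\<^sup>* a b"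
      show ?thesis
      proof (cases "b = v")
        case True then show ?thesis using sv by blast
      next
        case False
        then have "GS E (S - {v}) b c" using c by (auto simp: GS_def)
        then show ?thesis using h by (meson rtranclp.rtrancl_into_rtrancl)
      qed
    next
      assume "b = v" then show ?thesis using sv by blast
    next
      fix s assume s: "s \<in> S - {v}" "E v s" "(GS E (S - {v}))\<^sup>*\<^sup>* s b"
      show ?thesis
      proof (cases "b = v")
        case True then show ?thesis using sv by blast
      next
        case False
        then have "GS E (S - {v}) b c" using c by (auto simp: GS_def)
        then show ?thesis using s by (meson rtranclp.rtrancl_into_rtrancl)
      qed
    qed
  qed
qed

lemma ES:
  assumes "(GS E S)\<^sup>*\<^sup>* a b"
  shows "(GE E S x z)\<^sup>*\<^sup>* a b \<or> (GE E S x z)\<^sup>*\<^sup>* x b \<or> (GE E S x z)\<^sup>*\<^sup>* z b"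
  using assms
proof (induction rule: rtranclp_induct)
  case base
  then show ?case by simp
next
  case (step b c)
  show ?case
  proof (cases "{b, c} = {x, z}")
    case True
    then have "c = x \<or> c = z" by (metis insert_iff doubleton_eq_iff)
    then show ?thesis by auto
  next
    case False
    then have "GE E S x z b c" using step(2) by (simp add: GE_def)
    then show ?thesis using step(3) by (meson rtranclp.rtrancl_into_rtrancl)
  qed
qed

lemma AV:
  assumes "r\<^sup>*\<^sup>* a b" "a \<notin> T" "\<forall>t\<in>T. \<not> r\<^sup>*\<^sup>* t b"
  shows "(\<lambda>p q. r p q \<and> p \<notin> T \<and> q \<notin> T)\<^sup>*\<^sup>* a b"
  using assms
proof (induction rule: converse_rtranclp_induct)
  case base
  then show ?case by simp
next
  case (step a a')
  have "a' \<notin> T" using step(2) step(5) by blast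
  then have ih: "(\<lambda>p q. r p q \<and> p \<notin> T \<and> q \<notin> T)\<^sup>*\<^sup>* a' b" using step by blast
  have st: "(\<lambda>p q. r p q \<and> p \<notin> T \<and> q \<notin> T) a a'" using step(1,4) \<open>a' \<notin> T\<close> by simp
  show ?case using converse_rtranclp_into_rtranclp[OF st ih] .
qed


locale sg =
  fixes V :: "'a set" and E :: "'a \<Rightarrow> 'a \<Rightarrow> bool"
  assumes sg: "simple_graph V E"
begin

lemma symE: "E a b \<Longrightarrow> E b a" using sg by (auto simp: simple_graph_def)
lemma irrE: "\<not> E a a" using sg by (auto simp: simple_graph_def)
lemma inV: "E a b \<Longrightarrow> a \<in> V \<and> b \<in> V" using sg by (auto simp: simple_graph_def)
lemma finV: "finite V" using sg by (auto simp: simple_graph_def)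

lemma GS_sym: "(GS E S)\<^sup>*\<^sup>* a b \<Longrightarrow> (GS E S)\<^sup>*\<^sup>* b a"
proof -
  have "symp (GS E S)" by (auto simp: symp_def GS_def symE)
  then show "(GS E S)\<^sup>*\<^sup>* a b \<Longrightarrow> (GS E S)\<^sup>*\<^sup>* b a" by (meson sympD symp_rtranclp)
qed

lemma GE_sym: "(GE E S x z)\<^sup>*\<^sup>* a b \<Longrightarrow> (GE E S x z)\<^sup>*\<^sup>* b a"
proof -
  have "symp (GE E S x z)" by (auto simp: symp_def GE_def GS_def symE insert_commute)
  then show "(GE E S x z)\<^sup>*\<^sup>* a b \<Longrightarrow> (GE E S x z)\<^sup>*\<^sup>* b a" by (meson sympD symp_rtranclp)
qed

lemma GS_mono: "S \<subseteq> S' \<Longrightarrow> (GS E S)\<^sup>*\<^sup>* a b \<Longrightarrow> (GS E S')\<^sup>*\<^sup>* a b"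
  by (rule mono_rtranclp[rule_format]) (auto simp: GS_def)

lemma GS_ends: "(GS E S)\<^sup>*\<^sup>* a b \<Longrightarrow> a \<noteq> b \<Longrightarrow> a \<in> S \<and> b \<in> S"
  by (metis GS_def converse_rtranclpE rtranclp.cases)

lemma GS_step: "E a b \<Longrightarrow> a \<in> S \<Longrightarrow> b \<in> S \<Longrightarrow> (GS E S)\<^sup>*\<^sup>* b c \<Longrightarrow> (GS E S)\<^sup>*\<^sup>* a c"
  by (metis GS_def converse_rtranclp_into_rtranclp)

lemma GE_step: "E a b \<Longrightarrow> a \<in> S \<Longrightarrow> b \<in> S \<Longrightarrow> {a, b} \<noteq> {x, z} \<Longrightarrow> (GE E S x z)\<^sup>*\<^sup>* b c
   \<Longrightarrow> (GE E S x z)\<^sup>*\<^sup>* a c"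
  by (metis GE_def GS_def converse_rtranclp_into_rtranclp)

definition rt :: "'a set \<Rightarrow> 'a \<Rightarrow> 'a" where
  "rt W v = (SOME r. r \<in> W \<and> (GS E W)\<^sup>*\<^sup>* v r)"

lemma rt_in: "v \<in> W \<Longrightarrow> rt W v \<in> W \<and> (GS E W)\<^sup>*\<^sup>* v (rt W v)"
  unfolding rt_def by (rule someI[of _ v]) simp

lemma rt_eq: assumes "(GS E W)\<^sup>*\<^sup>* u v" shows "rt W u = rt W v"
proof -
  have "(\<lambda>r. r \<in> W \<and> (GS E W)\<^sup>*\<^sup>* u r) = (\<lambda>r. r \<in> W \<and> (GS E W)\<^sup>*\<^sup>* v r)"
    using assms GS_sym by (meson rtranclp_trans)
  then show ?thesis unfolding rt_def by simp
qed

lemma rt_edge: "u \<in> W \<Longrightarrow> v \<in> W \<Longrightarrow> E u v \<Longrightarrow> rt W u = rt W v"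
  by (rule rt_eq) (auto simp: GS_def)

definition Ch :: "'a set \<Rightarrow> 'a \<Rightarrow> 'a set" where
  "Ch W y = {x. x \<in> W \<and> E y x \<and> \<not> (GS E (W - {y}))\<^sup>*\<^sup>* x (rt W y)}"

definition FP :: "'a set \<Rightarrow> ('a \<times> 'a \<times> 'a) set" where
  "FP W = {(y, u, w). y \<in> W \<and> u \<in> W \<and> w \<in> W \<and> E y u \<and> E y w \<and> u \<notin> Ch W y \<and> w \<notin> Ch W y
      \<and> E u w \<and> \<not> (GE E (W - {y}) u w)\<^sup>*\<^sup>* w (rt W y)}"

lemma child_unique:
  assumes y: "y \<in> W" "y' \<in> W" and c: "z \<in> Ch W y" "z \<in> Ch W y'"
  shows "y = y'"
proof (rule ccontr)
  assume ne: "y \<noteq> y'"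
  let ?r = "rt W y"
  from c have z: "z \<in> W" "E y z" "E y' z" and n1: "\<not> (GS E (W-{y}))\<^sup>*\<^sup>* z ?r"
    and n2': "\<not> (GS E (W-{y'}))\<^sup>*\<^sup>* z (rt W y')" by (auto simp: Ch_def)
  have r': "rt W y' = ?r" using rt_edge[where u=y and v=z and W=W] rt_edge[where u=y' and v=z and W=W] z y by simp
  with n2' have n2: "\<not> (GS E (W-{y'}))\<^sup>*\<^sup>* z ?r" by simp
  have zy: "z \<noteq> y" "z \<noteq> y'" using z irrE by auto
  have reach: "(GS E W)\<^sup>*\<^sup>* z ?r" using rt_in[OF z(1)] rt_edge[where u=y and v=z and W=W] z y by simp
  have ry': "?r \<noteq> y'"
  proof
    assume "?r = y'"
    then have "(GS E (W-{y}))\<^sup>*\<^sup>* z ?r" using z y ne zy symE by (auto simp: GS_def)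
    then show False using n1 by simp
  qed
  have ry: "?r \<noteq> y"
  proof
    assume "?r = y"
    then have "(GS E (W-{y'}))\<^sup>*\<^sup>* z ?r" using z y ne zy symE by (auto simp: GS_def)
    then show False using n2 by simp
  qed
  from VS[OF reach, of y] n1 ry obtain s where s: "s \<in> W - {y}" "E y s" "(GS E (W - {y}))\<^sup>*\<^sup>* s ?r"
    by blast
  from VS[OF s(3), of y'] ry' show False
  proof (elim disjE exE conjE)
    assume h: "(GS E (W - {y} - {y'}))\<^sup>*\<^sup>* s ?r"
    have "s \<noteq> y'"
    proof
      assume "s = y'"
      then show False using GS_ends[OF h] ry' by auto
    qed
    then have "(GS E (W-{y'}))\<^sup>*\<^sup>* s ?r" using GS_mono[OF _ h] by auto
    then have "(GS E (W-{y'}))\<^sup>*\<^sup>* y ?r" using GS_step[of y s "W-{y'}"] s ne \<open>s \<noteq> y'\<close> y by auto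
    then have "(GS E (W-{y'}))\<^sup>*\<^sup>* z ?r" using GS_step[of z y "W-{y'}"] z y ne zy symE by auto
    then show False using n2 by simp
  next
    assume "?r = y'" then show False using ry' by simp
  next
    fix s' assume h: "s' \<in> W - {y} - {y'}" "E y' s'" "(GS E (W - {y} - {y'}))\<^sup>*\<^sup>* s' ?r"
    then have "(GS E (W-{y}))\<^sup>*\<^sup>* s' ?r" using GS_mono[OF _ h(3)] by auto
    then have "(GS E (W-{y}))\<^sup>*\<^sup>* y' ?r" using GS_step[of y' s' "W-{y}"] h ne y by auto
    then have "(GS E (W-{y}))\<^sup>*\<^sup>* z ?r" using GS_step[of z y' "W-{y}"] z y ne zy symE by auto
    then show False using n1 by simp
  qed
qed

end

context sg
begin

lemma GE_mono: "S \<subseteq> S' \<Longrightarrow> (GE E S x z)\<^sup>*\<^sup>* a b \<Longrightarrow> (GE E S' x z)\<^sup>*\<^sup>* a b"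
  by (rule mono_rtranclp[rule_format]) (auto simp: GE_def GS_def)

lemma GE_GS_mono: "S \<subseteq> S' \<Longrightarrow> (GE E S x z)\<^sup>*\<^sup>* a b \<Longrightarrow> (GS E S')\<^sup>*\<^sup>* a b"
  by (rule mono_rtranclp[rule_format]) (auto simp: GE_def GS_def)

lemma AV_GE:
  assumes "(\<lambda>p q. GE E S x z p q \<and> p \<notin> T \<and> q \<notin> T)\<^sup>*\<^sup>* a b" "w \<in> T" "S - T \<subseteq> S'"
  shows "(GE E S' x' w)\<^sup>*\<^sup>* a b"
  by (rule mono_rtranclp[rule_format, OF _ assms(1)]) (use assms(2,3) in \<open>auto simp: GE_def GS_def doubleton_eq_iff\<close>)

lemma FP_D:
  assumes "(y, u, w) \<in> FP W"
  shows "y \<in> W" "u \<in> W" "w \<in> W" "E y u" "E y w" "u \<notin> Ch W y" "w \<notin> Ch W y" "E u w"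
    "\<not> (GE E (W - {y}) u w)\<^sup>*\<^sup>* w (rt W y)"
    "(GS E (W - {y}))\<^sup>*\<^sup>* u (rt W y)" "(GS E (W - {y}))\<^sup>*\<^sup>* w (rt W y)"
    "y \<noteq> u" "y \<noteq> w" "u \<noteq> w"
  using assms irrE by (auto simp: FP_def Ch_def)

lemma far_partner_unique:
  assumes a: "(y, u, w) \<in> FP W" and b: "(y, u', w) \<in> FP W"
  shows "u = u'"
proof (rule ccontr)
  assume ne: "u \<noteq> u'"
  let ?r = "rt W y"
  let ?R1 = "GE E (W - {y}) u w"
  note A = FP_D[OF a] and B = FP_D[OF b]
  from ES[OF B(10), of u w] show False
  proof (elim disjE)
    assume "?R1\<^sup>*\<^sup>* u' ?r"
    then have "?R1\<^sup>*\<^sup>* w ?r" using GE_step[of w u' "W - {y}" u w] A B ne symE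
      by (auto simp: doubleton_eq_iff)
    then show False using A(9) by simp
  next
    assume h: "?R1\<^sup>*\<^sup>* u ?r"
    have "(\<lambda>p q. ?R1 p q \<and> p \<notin> {w} \<and> q \<notin> {w})\<^sup>*\<^sup>* u ?r"
      using AV[OF h, of "{w}"] A by auto
    then have "(GE E (W - {y}) u' w)\<^sup>*\<^sup>* u ?r" by (rule AV_GE) auto
    then have "(GE E (W - {y}) u' w)\<^sup>*\<^sup>* w ?r" using GE_step[of w u "W - {y}" u' w] A B ne symE
      by (auto simp: doubleton_eq_iff)
    then show False using B(9) by simp
  next
    assume "?R1\<^sup>*\<^sup>* w ?r" then show False using A(9) by simp
  qed
qed

lemma far_two:
  assumes a: "(y, u, w) \<in> FP W" and b: "(y', u', w) \<in> FP W" and ne: "y \<noteq> y'"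
  shows "y' = u"
proof (rule ccontr)
  assume ne2: "y' \<noteq> u"
  note A = FP_D[OF a] and B = FP_D[OF b]
  let ?r = "rt W y"
  have rr: "rt W y' = ?r" using rt_edge[where u=y and v=w and W=W] rt_edge[where u=y' and v=w and W=W] A B by simp
  let ?R1 = "GE E (W - {y}) u w"
  let ?R2 = "GE E (W - {y'}) u' w"
  have n2: "\<not> ?R2\<^sup>*\<^sup>* w ?r" using B(9) rr by simp
  have ny': "\<not> ?R1\<^sup>*\<^sup>* y' ?r"
  proof
    assume "?R1\<^sup>*\<^sup>* y' ?r"
    then have "?R1\<^sup>*\<^sup>* w ?r" using GE_step[of w y' "W - {y}" u w] A B ne ne2 symE
      by (auto simp: doubleton_eq_iff)
    then show False using A(9) by simp
  qed
  have hu: "?R1\<^sup>*\<^sup>* u ?r" using ES[OF A(10), of u w] A(9) by auto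
  have "(\<lambda>p q. ?R1 p q \<and> p \<notin> {w, y'} \<and> q \<notin> {w, y'})\<^sup>*\<^sup>* u ?r"
    using AV[OF hu, of "{w, y'}"] A ne2 ny' by auto
  then have P: "?R2\<^sup>*\<^sup>* u ?r" by (rule AV_GE) auto
  show False
  proof (cases "u' = u")
    case False
    then have "?R2\<^sup>*\<^sup>* w ?r" using GE_step[OF _ _ _ _ P, of w] A B ne ne2 symE
      by (auto simp: doubleton_eq_iff)
    then show False using n2 by simp
  next
    case True
    have "?R2\<^sup>*\<^sup>* y ?r" using GE_step[OF _ _ _ _ P, of y] A B ne ne2 True
      by (auto simp: doubleton_eq_iff)
    then have "?R2\<^sup>*\<^sup>* w ?r" using GE_step[of w y "W - {y'}" u' w] A B ne ne2 symE True
      by (auto simp: doubleton_eq_iff)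
    then show False using n2 by simp
  qed
qed

lemma far_child:
  assumes a: "(y, u, w) \<in> FP W" and c: "w \<in> Ch W y0" and y0: "y0 \<in> W"
  shows "y0 = u"
proof (rule ccontr)
  assume ne: "y0 \<noteq> u"
  note A = FP_D[OF a]
  let ?r = "rt W y"
  have ny: "y0 \<noteq> y" using c A(7) by auto
  from c have w0: "E y0 w" and n0': "\<not> (GS E (W - {y0}))\<^sup>*\<^sup>* w (rt W y0)" by (auto simp: Ch_def)
  have rr: "rt W y0 = ?r" using rt_edge[where u=y and v=w and W=W] rt_edge[where u=y0 and v=w and W=W] A y0 w0 by simp
  have n0: "\<not> (GS E (W - {y0}))\<^sup>*\<^sup>* w ?r" using n0' rr by simp
  have wy0: "w \<noteq> y0" using w0 irrE by auto
  let ?R1 = "GE E (W - {y}) u w"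
  have step1: "?R1 w y0" using A w0 symE ny ne wy0 y0 by (auto simp: GE_def GS_def doubleton_eq_iff)
  from VS[OF A(10), of y0] show False
  proof (elim disjE exE conjE)
    assume "(GS E (W - {y} - {y0}))\<^sup>*\<^sup>* u ?r"
    then have "(GS E (W - {y0}))\<^sup>*\<^sup>* u ?r" by (rule GS_mono[rotated]) auto
    then have "(GS E (W - {y0}))\<^sup>*\<^sup>* w ?r" using GS_step[of w u "W - {y0}"] A symE ne wy0 by auto
    then show False using n0 by simp
  next
    assume "?r = y0"
    then have "?R1\<^sup>*\<^sup>* w ?r" using step1 by auto
    then show False using A(9) by simp
  next
    fix s assume s: "s \<in> W - {y} - {y0}" "E y0 s" "(GS E (W - {y} - {y0}))\<^sup>*\<^sup>* s ?r"
    let ?R3 = "GE E (W - {y} - {y0}) u w"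
    from ES[OF s(3), of u w] show False
    proof (elim disjE)
      assume "?R3\<^sup>*\<^sup>* s ?r"
      then have "?R1\<^sup>*\<^sup>* s ?r" by (rule GE_mono[rotated]) auto
      then have "?R1\<^sup>*\<^sup>* y0 ?r" using GE_step[of y0 s "W - {y}" u w] s ne ny y0 wy0
        by (auto simp: doubleton_eq_iff)
      then have "?R1\<^sup>*\<^sup>* w ?r" using step1 by (meson converse_rtranclp_into_rtranclp)
      then show False using A(9) by simp
    next
      assume "?R3\<^sup>*\<^sup>* u ?r"
      then have "(GS E (W - {y0}))\<^sup>*\<^sup>* u ?r" by (rule GE_GS_mono[rotated]) auto
      then have "(GS E (W - {y0}))\<^sup>*\<^sup>* w ?r" using GS_step[of w u "W - {y0}"] A symE ne wy0 by auto
      then show False using n0 by simp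
    next
      assume "?R3\<^sup>*\<^sup>* w ?r"
      then have "?R1\<^sup>*\<^sup>* w ?r" by (rule GE_mono[rotated]) auto
      then show False using A(9) by simp
    qed
  qed
qed

end

context sg
begin

lemma path_props:
  "rtrancl_path (GE E S x z) a l b \<Longrightarrow> set l \<subseteq> S \<and> successively E (a # l)"
proof (induction rule: rtrancl_path.induct)
  case (base x)
  then show ?case by simp
next
  case (step a c l b)
  then show ?case by (cases l) (auto simp: GE_def GS_def)
qed

lemma EA:
  assumes ne: "x \<noteq> z" and r: "(GE E S x z)\<^sup>*\<^sup>* x z"
  shows "event_A E x z S"
proof -
  obtain xs where "rtrancl_path (GE E S x z) x xs z" using r rtranclp_eq_rtrancl_path by metis
  then obtain xs' where p: "rtrancl_path (GE E S x z) x xs' z" and d: "distinct (x # xs')"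
    using rtrancl_path_distinct by metis
  have "xs' \<noteq> []" using p ne by (cases rule: rtrancl_path.cases) auto
  then obtain ws where xs': "xs' = ws @ [z]" using rtrancl_path_last[OF p]
    by (metis append_butlast_last_id)
  have "ws \<noteq> []"
  proof
    assume "ws = []"
    then have "rtrancl_path (GE E S x z) x [z] z" using p xs' by simp
    then have "GE E S x z x z" by (cases rule: rtrancl_path.cases) (auto elim: rtrancl_path.cases)
    then show False by (simp add: GE_def)
  qed
  moreover have "set ws \<subseteq> S" using path_props[OF p] xs' by auto
  moreover have "successively E (x # ws @ [z])" using path_props[OF p] xs' by simp
  ultimately show ?thesis unfolding event_A_def using d xs' by auto
qed

lemma classify:
  assumes p: "path2 E x y z" and W: "x \<in> W" "y \<in> W" "z \<in> W" and nA: "\<not> event_A E x z (W - {y})"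
    and cx: "x \<notin> Ch W y" and cz: "z \<notin> Ch W y"
  shows "(y, x, z) \<in> FP W \<or> (y, z, x) \<in> FP W"
proof (rule ccontr)
  assume nf: "\<not> ?thesis"
  let ?r = "rt W y"
  let ?R = "GE E (W - {y}) x z"
  have pp: "x \<noteq> y" "y \<noteq> z" "x \<noteq> z" "E x y" "E y z" using p by (auto simp: path2_def)
  have eyx: "E y x" using pp(4) symE by blast
  have comm: "GE E (W - {y}) z x = ?R" by (auto simp: GE_def insert_commute fun_eq_iff)
  have gx: "(GS E (W - {y}))\<^sup>*\<^sup>* x ?r" using cx W eyx unfolding Ch_def by blast
  have gz: "(GS E (W - {y}))\<^sup>*\<^sup>* z ?r" using cz W pp(5) unfolding Ch_def by blast
  have both: "?R\<^sup>*\<^sup>* x ?r \<and> ?R\<^sup>*\<^sup>* z ?r"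
  proof (cases "E x z")
    case True
    have n1: "(y, x, z) \<notin> FP W" and n2: "(y, z, x) \<notin> FP W" using nf by auto
    have "E z x" using True symE by blast
    have a: "?R\<^sup>*\<^sup>* z ?r"
    proof (rule ccontr)
      assume "\<not> ?R\<^sup>*\<^sup>* z ?r"
      then have "(y, x, z) \<in> FP W" unfolding FP_def using W eyx pp(5) cx cz True by simp
      then show False using n1 by simp
    qed
    have b: "?R\<^sup>*\<^sup>* x ?r"
    proof (rule ccontr)
      assume "\<not> ?R\<^sup>*\<^sup>* x ?r"
      then have "\<not> (GE E (W - {y}) z x)\<^sup>*\<^sup>* x ?r" using comm by simp
      then have "(y, z, x) \<in> FP W" unfolding FP_def using W eyx pp(5) cx cz \<open>E z x\<close> by simp
      then show False using n2 by simp
    qed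
    show ?thesis using a b by simp
  next
    case False
    have "\<And>a b. GS E (W - {y}) a b \<longrightarrow> ?R a b"
    proof (intro impI)
      fix a b assume g: "GS E (W - {y}) a b"
      have "{a, b} \<noteq> {x, z}"
      proof
        assume "{a, b} = {x, z}"
        then have "(a = x \<and> b = z) \<or> (a = z \<and> b = x)" by (simp add: doubleton_eq_iff)
        then show False using g False symE unfolding GS_def by blast
      qed
      then show "?R a b" using g unfolding GE_def by simp
    qed
    then show ?thesis using gx gz mono_rtranclp by metis
  qed
  then have "?R\<^sup>*\<^sup>* x z" using GE_sym by (meson rtranclp_trans)
  then have "event_A E x z (W - {y})" using EA pp by blast
  then show False using nA by simp
qed

definition F :: "'a set \<Rightarrow> ('a \<times> 'a set) set" where
  "F W = {(y, {x, z}) | x y z. path2 E x y z \<and> x \<in> W \<and> y \<in> W \<and> z \<in> W \<and> \<not> event_A E x z (W - {y})}"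

definition ChP :: "'a set \<Rightarrow> ('a \<times> 'a) set" where
  "ChP W = Sigma W (Ch W)"

definition D1 :: "'a set \<Rightarrow> (('a \<times> 'a) \<times> 'a) set" where
  "D1 W = Sigma (ChP W) (\<lambda>p. {z. z \<in> W \<and> E (fst p) z \<and> z \<noteq> snd p})"

lemma F_cover: "F W \<subseteq> (\<lambda>((y, x), z). (y, {x, z})) ` D1 W \<union> (\<lambda>(y, u, w). (y, {u, w})) ` FP W"
proof
  fix t assume "t \<in> F W"
  then obtain x y z where t: "t = (y, {x, z})" and p: "path2 E x y z" and W: "x \<in> W" "y \<in> W" "z \<in> W"
    and nA: "\<not> event_A E x z (W - {y})" by (auto simp: F_def)
  have pp: "x \<noteq> y" "y \<noteq> z" "x \<noteq> z" "E x y" "E y z" using p by (auto simp: path2_def)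
  show "t \<in> (\<lambda>((y, x), z). (y, {x, z})) ` D1 W \<union> (\<lambda>(y, u, w). (y, {u, w})) ` FP W"
  proof (cases "x \<in> Ch W y")
    case True
    then have "((y, x), z) \<in> D1 W" using W pp by (auto simp: D1_def ChP_def)
    then show ?thesis using t by force
  next
    case cx: False
    show ?thesis
    proof (cases "z \<in> Ch W y")
      case True
      then have "((y, z), x) \<in> D1 W" using W pp symE by (auto simp: D1_def ChP_def)
      then have "(y, {z, x}) \<in> (\<lambda>((y, x), z). (y, {x, z})) ` D1 W" by force
      then show ?thesis using t by (simp add: insert_commute)
    next
      case cz: False
      from classify[OF p W nA cx cz] show ?thesis
      proof
        assume "(y, x, z) \<in> FP W" then show ?thesis using t by force
      next
        assume "(y, z, x) \<in> FP W"
        then have "(y, {z, x}) \<in> (\<lambda>(y, u, w). (y, {u, w})) ` FP W" by force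
        then show ?thesis using t by (simp add: insert_commute)
      qed
    qed
  qed
qed

end

context sg
begin

lemma fin_ChP: "W \<subseteq> V \<Longrightarrow> finite (ChP W)"
  unfolding ChP_def by (rule finite_SigmaI) (auto intro: finite_subset[OF _ finV] simp: Ch_def)

lemma fin_FP: "W \<subseteq> V \<Longrightarrow> finite (FP W)"
proof -
  assume W: "W \<subseteq> V"
  have "FP W \<subseteq> W \<times> W \<times> W" by (auto simp: FP_def)
  moreover have "finite (W \<times> W \<times> W)" using finite_subset[OF W finV] by simp
  ultimately show ?thesis by (rule finite_subset)
qed

lemma fin_D1: "W \<subseteq> V \<Longrightarrow> finite (D1 W)"
  unfolding D1_def by (rule finite_SigmaI) (auto intro: fin_ChP finite_subset[OF _ finV])

lemma fiber_Ch: "card {p \<in> ChP W. snd p = w} \<le> 1"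
proof -
  have "\<forall>a\<in>{p \<in> ChP W. snd p = w}. \<forall>b\<in>{p \<in> ChP W. snd p = w}. a = b"
    using child_unique by (auto simp: ChP_def)
  then show ?thesis using card_le_Suc0_iff_eq[of "{p \<in> ChP W. snd p = w}"]
    by (cases "finite {p \<in> ChP W. snd p = w}") auto
qed

lemma fiber_FP_sub:
  assumes "(y, u, w) \<in> FP W"
  shows "{t \<in> FP W. snd (snd t) = w} \<subseteq> {(y, u, w), (u, y, w)}"
proof
  fix t assume t: "t \<in> {t \<in> FP W. snd (snd t) = w}"
  then obtain y' u' where t': "t = (y', u', w)" "(y', u', w) \<in> FP W" by (cases t) auto
  show "t \<in> {(y, u, w), (u, y, w)}"
  proof (cases "y' = y")
    case True
    then show ?thesis using far_partner_unique[OF assms] t' by auto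
  next
    case False
    then have "y' = u" using far_two[OF assms t'(2)] by auto
    moreover have "u' = y" using far_two[OF t'(2) assms] False by auto
    ultimately show ?thesis using t' by auto
  qed
qed

lemma card2: "card {a, b} \<le> 2"
  by (cases "a = b") auto

lemma fiber_bound: "W \<subseteq> V \<Longrightarrow> 2 * card {p \<in> ChP W. snd p = w} + card {t \<in> FP W. snd (snd t) = w} \<le> 3"
proof -
  assume W: "W \<subseteq> V"
  let ?C = "{p \<in> ChP W. snd p = w}"
  let ?G = "{t \<in> FP W. snd (snd t) = w}"
  have c1: "card ?C \<le> 1" by (rule fiber_Ch)
  show ?thesis
  proof (cases "?G = {}")
    case True
    then have "card ?G = 0" by (simp only: True card.empty)
    then show ?thesis using c1 by linarith
  next
    case False
    then obtain t where t: "t \<in> ?G" by (meson ex_in_conv)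
    obtain y u w' where tt: "t = (y, u, w')" by (cases t) blast
    have yu0: "t \<in> FP W \<and> snd (snd t) = w" using t by (rule CollectD)
    have ww: "w' = w" using yu0 unfolding tt by simp
    have yu: "(y, u, w) \<in> FP W" using yu0 unfolding tt ww by simp
    have fin2: "finite {(y, u, w), (u, y, w)}" by simp
    have c2': "card {(y, u, w), (u, y, w)} \<le> 2" by (rule card2)
    have c2: "card ?G \<le> 2"
      using card_mono[OF fin2 fiber_FP_sub[OF yu]] c2' by linarith
    show ?thesis
    proof (cases "?C = {}")
      case True
      then have "card ?C = 0" by (simp only: True card.empty)
      then show ?thesis using c2 by linarith
    next
      case False
      then obtain p where p: "p \<in> ?C" by (meson ex_in_conv)
      obtain y0 w0 where pp: "p = (y0, w0)" by (cases p) blast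
      have p0: "p \<in> ChP W \<and> snd p = w" using p by (rule CollectD)
      have ww0: "w0 = w" using p0 unfolding pp by simp
      have y0: "y0 \<in> W" "w \<in> Ch W y0" using p0 unfolding pp ww0 ChP_def by auto
      have sub: "?G \<subseteq> {(y, u, w)}"
      proof
        fix t assume t: "t \<in> ?G"
        have tin: "t \<in> FP W" using CollectD[OF t] by (rule conjunct1)
        have "t \<in> {(y, u, w), (u, y, w)}" using subsetD[OF fiber_FP_sub[OF yu] t] .
        then have t2: "t = (y, u, w) \<or> t = (u, y, w)" by simp
        have uy0: "u = y0" using far_child[OF yu y0(2) y0(1)] by simp
        have "t \<noteq> (u, y, w)"
        proof
          assume "t = (u, y, w)"
          then have "(u, y, w) \<in> FP W" using tin by simp
          then have "y0 = y" using far_child[OF _ y0(2) y0(1)] by simp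
          then show False using uy0 FP_D(12)[OF yu] by simp
        qed
        then show "t \<in> {(y, u, w)}" using t2 by simp
      qed
      have "card ?G \<le> 1" using card_mono[OF _ sub] by simp
      then show ?thesis using c1 by linarith
    qed
  qed
qed

end

context sg
begin

lemma deg_ge1: "x \<in> V \<Longrightarrow> E y x \<Longrightarrow> card {z. z \<in> W \<and> E y z \<and> z \<noteq> x} \<le> degree V E y \<and> 1 \<le> degree V E y"
proof -
  assume x: "x \<in> V" "E y x"
  have fin: "finite {v \<in> V. E y v}" using finV by simp
  have "{z. z \<in> W \<and> E y z \<and> z \<noteq> x} \<subseteq> {v \<in> V. E y v}" using inV by blast
  then have a: "card {z. z \<in> W \<and> E y z \<and> z \<noteq> x} \<le> degree V E y"
    unfolding degree_def using card_mono[OF fin] by blast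
  have "x \<in> {v \<in> V. E y v}" using x by simp
  then have "card {v \<in> V. E y v} \<noteq> 0" using fin by (metis card_0_eq empty_iff)
  then show ?thesis using a unfolding degree_def by simp
qed

lemma deg_ge2: "u \<in> V \<Longrightarrow> w \<in> V \<Longrightarrow> E y u \<Longrightarrow> E y w \<Longrightarrow> u \<noteq> w \<Longrightarrow> 2 \<le> degree V E y"
proof -
  assume h: "u \<in> V" "w \<in> V" "E y u" "E y w" "u \<noteq> w"
  have fin: "finite {v \<in> V. E y v}" using finV by simp
  have "{u, w} \<subseteq> {v \<in> V. E y v}" using h by simp
  then have "card {u, w} \<le> degree V E y" unfolding degree_def using card_mono[OF fin] by blast
  then show ?thesis using h(5) by simp
qed

lemma comb_bound:
  assumes W: "W \<subseteq> V"
  shows "2 * card (ChP W) + card (FP W) \<le> 3 * card W"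
proof -
  have fW: "finite W" using finite_subset[OF W finV] .
  have g1: "snd ` ChP W \<subseteq> W" by (auto simp: ChP_def Ch_def)
  have g2: "(\<lambda>t. snd (snd t)) ` FP W \<subseteq> W" by (auto simp: FP_def)
  have c1: "card (ChP W) = (\<Sum>w\<in>W. card {p \<in> ChP W. snd p = w})"
    using sum.group[OF fin_ChP[OF W] fW g1, of "\<lambda>_. 1::nat"] by simp
  have c2: "card (FP W) = (\<Sum>w\<in>W. card {t \<in> FP W. snd (snd t) = w})"
    using sum.group[OF fin_FP[OF W] fW g2, of "\<lambda>_. 1::nat"] by simp
  have "2 * card (ChP W) + card (FP W) = (\<Sum>w\<in>W. 2 * card {p \<in> ChP W. snd p = w} + card {t \<in> FP W. snd (snd t) = w})"
    unfolding c1 c2 by (simp add: sum.distrib sum_distrib_left)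
  also have "\<dots> \<le> (\<Sum>w\<in>W. 3)" by (rule sum_mono) (rule fiber_bound[OF W])
  also have "\<dots> = 3 * card W" by simp
  finally show ?thesis .
qed

lemma Q_bound:
  assumes W: "W \<subseteq> V"
  shows "(\<Sum>(y, _)\<in>F W. 1 / real (degree V E y)) \<le> 3 / 2 * real (card W)"
proof -
  define f :: "'a \<times> 'a set \<Rightarrow> real" where "f = (\<lambda>(y, _). 1 / real (degree V E y))"
  define g1 :: "('a \<times> 'a) \<times> 'a \<Rightarrow> 'a \<times> 'a set" where "g1 = (\<lambda>((y, x), z). (y, {x, z}))"
  define g2 :: "'a \<times> 'a \<times> 'a \<Rightarrow> 'a \<times> 'a set" where "g2 = (\<lambda>(y, u, w). (y, {u, w}))"
  let ?A = "g1 ` D1 W" and ?B = "g2 ` FP W"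
  have fD1: "finite (D1 W)" using fin_D1[OF W] .
  have fFP: "finite (FP W)" using fin_FP[OF W] .
  have fA: "finite ?A" using fD1 by simp
  have fB: "finite ?B" using fFP by simp
  have nn: "\<And>t. 0 \<le> f t" unfolding f_def by auto
  have cov: "F W \<subseteq> ?A \<union> ?B" using F_cover unfolding g1_def g2_def .
  have "sum f (F W) \<le> sum f (?A \<union> ?B)"
    by (rule sum_mono2) (use fA fB cov nn in auto)
  also have "\<dots> \<le> sum f ?A + sum f ?B"
  proof -
    have "sum f (?A \<union> ?B) = sum f ?A + sum f ?B - sum f (?A \<inter> ?B)"
      by (rule sum_Un) (use fA fB in auto)
    moreover have "0 \<le> sum f (?A \<inter> ?B)" by (rule sum_nonneg) (use nn in auto)
    ultimately show ?thesis by linarith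
  qed
  finally have s1: "sum f (F W) \<le> sum f ?A + sum f ?B" .
  have hA: "sum f ?A \<le> real (card (ChP W))"
  proof -
    have "sum f ?A \<le> sum (f \<circ> g1) (D1 W)" by (rule sum_image_le) (use fD1 nn in auto)
    also have "\<dots> = (\<Sum>p\<in>ChP W. \<Sum>z\<in>{z. z \<in> W \<and> E (fst p) z \<and> z \<noteq> snd p}. 1 / real (degree V E (fst p)))"
      unfolding D1_def
      by (subst sum.Sigma) (use fin_ChP[OF W] finite_subset[OF W finV] in \<open>auto simp: f_def g1_def intro!: sum.cong\<close>)
    also have "\<dots> \<le> (\<Sum>p\<in>ChP W. 1)"
    proof (rule sum_mono)
      fix p assume p: "p \<in> ChP W"
      obtain y x where pp: "p = (y, x)" by (cases p) blast
      have x: "x \<in> V" "E y x" using p W unfolding pp ChP_def Ch_def by auto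
      have d: "card {z. z \<in> W \<and> E y z \<and> z \<noteq> x} \<le> degree V E y" "1 \<le> degree V E y"
        using deg_ge1[OF x] by auto
      have "(\<Sum>z\<in>{z. z \<in> W \<and> E y z \<and> z \<noteq> x}. 1 / real (degree V E y))
          = real (card {z. z \<in> W \<and> E y z \<and> z \<noteq> x}) / real (degree V E y)" by simp
      also have "\<dots> \<le> 1" using d by (simp add: divide_le_eq_1)
      finally show "(\<Sum>z\<in>{z. z \<in> W \<and> E (fst p) z \<and> z \<noteq> snd p}. 1 / real (degree V E (fst p))) \<le> 1"
        unfolding pp by simp
    qed
    also have "\<dots> = real (card (ChP W))" by simp
    finally show ?thesis .
  qed
  have hB: "sum f ?B \<le> real (card (FP W)) / 2"
  proof -
    have "sum f ?B \<le> sum (f \<circ> g2) (FP W)" by (rule sum_image_le) (use fFP nn in auto)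
    also have "\<dots> \<le> (\<Sum>t\<in>FP W. 1 / 2)"
    proof (rule sum_mono)
      fix t assume t: "t \<in> FP W"
      obtain y u w where tt: "t = (y, u, w)" by (cases t) blast
      have m: "(y, u, w) \<in> FP W" using t tt by simp
      have "2 \<le> degree V E y" using deg_ge2[of u w y] FP_D[OF m] W by auto
      then show "(f \<circ> g2) t \<le> 1 / 2" unfolding tt f_def g2_def by (simp add: field_simps)
    qed
    also have "\<dots> = real (card (FP W)) / 2" by simp
    finally show ?thesis .
  qed
  have "real (card (ChP W)) + real (card (FP W)) / 2 \<le> 3 / 2 * real (card W)"
    using comb_bound[OF W] by linarith
  then have "sum f (F W) \<le> 3 / 2 * real (card W)" using s1 hA hB by linarith
  then show ?thesis unfolding f_def .
qed

end

definition mu :: "real \<Rightarrow> 'a set \<Rightarrow> 'a set \<Rightarrow> real" where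
  "mu p T U = p ^ card U * (1 - p) ^ card (T - U)"

lemma G1:
  assumes fin: "finite S" and a: "a \<notin> S"
  shows "(\<Sum>U\<in>Pow (insert a S). mu p (insert a S) U * g U)
       = (\<Sum>U\<in>Pow S. mu p S U * (p * g (insert a U) + (1 - p) * g U))"
proof -
  have P: "Pow (insert a S) = Pow S \<union> insert a ` Pow S" by (rule Pow_insert)
  have fP: "finite (Pow S)" using fin by simp
  have disj: "Pow S \<inter> insert a ` Pow S = {}" using a by auto
  have inj: "inj_on (insert a) (Pow S)"
  proof (rule inj_onI)
    fix U U' assume "U \<in> Pow S" "U' \<in> Pow S" "insert a U = insert a U'"
    then show "U = U'" using a by (metis PowD insert_ident subset_iff)
  qed
  have m1: "mu p (insert a S) U = (1 - p) * mu p S U" if "U \<in> Pow S" for U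
  proof -
    have "insert a S - U = insert a (S - U)" using that a by auto
    moreover have "finite (S - U)" using fin by simp
    moreover have "a \<notin> S - U" using a by simp
    ultimately have "card (insert a S - U) = Suc (card (S - U))" by simp
    then show ?thesis unfolding mu_def by simp
  qed
  have m2: "mu p (insert a S) (insert a U) = p * mu p S U" if "U \<in> Pow S" for U
  proof -
    have "insert a S - insert a U = S - U" using that a by auto
    moreover have "finite U" using that fin finite_subset by auto
    moreover have "a \<notin> U" using that a by auto
    ultimately have "card (insert a U) = Suc (card U)" "card (insert a S - insert a U) = card (S - U)" by simp_all
    then show ?thesis unfolding mu_def by simp
  qed
  have "(\<Sum>U\<in>Pow (insert a S). mu p (insert a S) U * g U)
      = (\<Sum>U\<in>Pow S. mu p (insert a S) U * g U) + (\<Sum>U\<in>insert a ` Pow S. mu p (insert a S) U * g U)"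
    unfolding P by (rule sum.union_disjoint) (use fP disj in auto)
  also have "(\<Sum>U\<in>insert a ` Pow S. mu p (insert a S) U * g U) = (\<Sum>U\<in>Pow S. mu p (insert a S) (insert a U) * g (insert a U))"
    by (subst sum.reindex[OF inj]) simp
  also have "(\<Sum>U\<in>Pow S. mu p (insert a S) U * g U) = (\<Sum>U\<in>Pow S. (1 - p) * mu p S U * g U)"
    by (rule sum.cong) (simp_all add: m1)
  also have "(\<Sum>U\<in>Pow S. mu p (insert a S) (insert a U) * g (insert a U)) = (\<Sum>U\<in>Pow S. p * mu p S U * g (insert a U))"
    by (rule sum.cong) (simp_all add: m2)
  also have "(\<Sum>U\<in>Pow S. (1 - p) * mu p S U * g U) + (\<Sum>U\<in>Pow S. p * mu p S U * g (insert a U))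
      = (\<Sum>U\<in>Pow S. mu p S U * (p * g (insert a U) + (1 - p) * g U))"
    by (simp add: sum.distrib[symmetric] algebra_simps)
  finally show ?thesis .
qed

lemma G2:
  assumes fin: "finite S" and a: "a \<notin> S"
    and h1: "\<And>U. U \<subseteq> S \<Longrightarrow> g (insert a U) = g1 U" and h0: "\<And>U. U \<subseteq> S \<Longrightarrow> g U = g0 U"
  shows "(\<Sum>U\<in>Pow (insert a S). mu p (insert a S) U * g U)
       = (\<Sum>U\<in>Pow S. mu p S U * (p * g1 U + (1 - p) * g0 U))"
  unfolding G1[OF fin a] by (rule sum.cong) (simp_all add: h1 h0)

lemma mu_sum1: "finite T \<Longrightarrow> (\<Sum>U\<in>Pow T. mu p T U) = 1"
proof (induction rule: finite_induct)
  case empty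
  then show ?case by (simp add: mu_def)
next
  case (insert a S)
  have "(\<Sum>U\<in>Pow (insert a S). mu p (insert a S) U) = (\<Sum>U\<in>Pow (insert a S). mu p (insert a S) U * 1)" by simp
  also have "\<dots> = (\<Sum>U\<in>Pow S. mu p S U * (p * 1 + (1 - p) * 1))" by (rule G1[OF insert(1,2)])
  also have "\<dots> = 1" using insert(3) by simp
  finally show ?case .
qed

lemma mu_card: "finite T \<Longrightarrow> (\<Sum>U\<in>Pow T. mu p T U * real (card U)) = p * real (card T)"
proof (induction rule: finite_induct)
  case empty
  then show ?case by (simp add: mu_def)
next
  case (insert a S)
  have "(\<Sum>U\<in>Pow (insert a S). mu p (insert a S) U * real (card U))
      = (\<Sum>U\<in>Pow S. mu p S U * (p * (real (card U) + 1) + (1 - p) * real (card U)))"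
  proof (rule G2[OF insert(1,2)])
    fix U assume "U \<subseteq> S"
    then have "finite U" "a \<notin> U" using insert(1,2) finite_subset by auto
    then show "real (card (insert a U)) = real (card U) + 1" by simp
  qed simp
  also have "\<dots> = (\<Sum>U\<in>Pow S. mu p S U * real (card U)) + p * (\<Sum>U\<in>Pow S. mu p S U)"
    by (simp add: algebra_simps sum.distrib sum_distrib_left)
  also have "\<dots> = p * real (card (insert a S))" using insert mu_sum1[OF insert(1), of p] by (simp add: algebra_simps)
  finally show ?case .
qed

lemma event_A_cong: "event_A E x z U = event_A E x z (U - {x, z})"
  unfolding event_A_def by auto


lemma event_A_ins:
  assumes "x \<notin> U" "z \<notin> U"
  shows "event_A E x z (insert x (insert z U)) = event_A E x z U"
    "event_A E x z (insert x U) = event_A E x z U"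
    "event_A E x z (insert z U) = event_A E x z U"
proof -
  have "insert x (insert z U) - {x, z} = U - {x, z}" "insert x U - {x, z} = U - {x, z}"
    "insert z U - {x, z} = U - {x, z}" by auto
  then show "event_A E x z (insert x (insert z U)) = event_A E x z U"
    "event_A E x z (insert x U) = event_A E x z U"
    "event_A E x z (insert z U) = event_A E x z U"
    by (metis event_A_cong)+
qed

lemma triple_prob:
  assumes fin: "finite V" and xyz: "x \<in> V" "y \<in> V" "z \<in> V" "x \<noteq> y" "y \<noteq> z" "x \<noteq> z"
  shows "(\<Sum>W\<in>Pow V. mu p V W * (if x \<in> W \<and> y \<in> W \<and> z \<in> W \<and> \<not> event_A E x z (W - {y}) then 1 else 0))
         = p ^ 3 * (\<Sum>U\<in>Pow (V - {x, y, z}). mu p (V - {x, y, z}) U * (if event_A E x z U then 0 else 1))"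
proof -
  define B where "B = V - {x, y, z}"
  have fB: "finite B" using fin by (simp add: B_def)
  have V: "V = insert x (insert y (insert z B))" using xyz by (auto simp: B_def)
  have nB: "x \<notin> B" "y \<notin> B" "z \<notin> B" by (auto simp: B_def)
  have "(\<Sum>W\<in>Pow V. mu p V W * (if x \<in> W \<and> y \<in> W \<and> z \<in> W \<and> \<not> event_A E x z (W - {y}) then 1 else 0))
      = (\<Sum>U\<in>Pow (insert y (insert z B)). mu p (insert y (insert z B)) U *
           (p * (if y \<in> U \<and> z \<in> U \<and> \<not> event_A E x z (insert x U - {y}) then 1 else 0) + (1 - p) * 0))"
    unfolding V by (rule G2) (use fB nB xyz in auto)
  also have "\<dots> = p * (\<Sum>U\<in>Pow (insert y (insert z B)). mu p (insert y (insert z B)) U *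
           (if y \<in> U \<and> z \<in> U \<and> \<not> event_A E x z (insert x U - {y}) then 1 else 0))"
    by (simp add: sum_distrib_left algebra_simps)
  also have "(\<Sum>U\<in>Pow (insert y (insert z B)). mu p (insert y (insert z B)) U *
           (if y \<in> U \<and> z \<in> U \<and> \<not> event_A E x z (insert x U - {y}) then 1 else 0))
      = (\<Sum>U\<in>Pow (insert z B). mu p (insert z B) U *
           (p * (if z \<in> U \<and> \<not> event_A E x z (insert x U) then 1 else 0) + (1 - p) * 0))"
  proof (rule G2)
    fix U assume U: "U \<subseteq> insert z B"
    then have "y \<notin> U" using nB xyz by auto
    then have "insert x (insert y U) - {y} = insert x U" using xyz by auto
    then show "(if y \<in> insert y U \<and> z \<in> insert y U \<and> \<not> event_A E x z (insert x (insert y U) - {y}) then 1 else 0)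
      = (if z \<in> U \<and> \<not> event_A E x z (insert x U) then 1 else (0::real))" using xyz by simp
  qed (use fB nB xyz in auto)
  also have "\<dots> = p * (\<Sum>U\<in>Pow (insert z B). mu p (insert z B) U *
           (if z \<in> U \<and> \<not> event_A E x z (insert x U) then 1 else 0))"
    by (simp add: sum_distrib_left algebra_simps)
  also have "(\<Sum>U\<in>Pow (insert z B). mu p (insert z B) U *
           (if z \<in> U \<and> \<not> event_A E x z (insert x U) then 1 else 0))
      = (\<Sum>U\<in>Pow B. mu p B U * (p * (if event_A E x z U then 0 else 1) + (1 - p) * 0))"
  proof (rule G2)
    fix U assume U: "U \<subseteq> B"
    then have "x \<notin> U" "z \<notin> U" using nB by auto
    then show "(if z \<in> insert z U \<and> \<not> event_A E x z (insert x (insert z U)) then 1 else 0)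
      = (if event_A E x z U then 0 else (1::real))" using event_A_ins(1)[of x U z E] by simp
  qed (use fB nB xyz in auto)
  also have "\<dots> = p * (\<Sum>U\<in>Pow B. mu p B U * (if event_A E x z U then 0 else 1))"
    by (simp add: sum_distrib_left algebra_simps)
  finally show ?thesis unfolding B_def by (simp add: power3_eq_cube algebra_simps)
qed

lemma one_minus_prob:
  assumes fin: "finite V" and xyz: "x \<in> V" "y \<in> V" "z \<in> V" "x \<noteq> y" "y \<noteq> z" "x \<noteq> z"
  shows "1 - prob_A V E p x y z = (\<Sum>U\<in>Pow (V - {x, y, z}). mu p (V - {x, y, z}) U * (if event_A E x z U then 0 else 1))"
proof -
  define B where "B = V - {x, y, z}"
  have fB: "finite B" using fin by (simp add: B_def)
  have V: "V - {y} = insert x (insert z B)" using xyz by (auto simp: B_def)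
  have nB: "x \<notin> B" "y \<notin> B" "z \<notin> B" by (auto simp: B_def)
  have fV: "finite (Pow (V - {y}))" using fin by simp
  have "prob_A V E p x y z = (\<Sum>U\<in>Pow (V - {y}). mu p (V - {y}) U * (if event_A E x z U then 1 else 0))"
  proof -
    have eq: "{U. U \<subseteq> V - {y} \<and> event_A E x z U} = {U \<in> Pow (V - {y}). event_A E x z U}" by auto
    show ?thesis unfolding prob_A_def eq sum.inter_filter[OF fV]
      by (rule sum.cong) (auto simp: mu_def)
  qed
  moreover have "(\<Sum>U\<in>Pow (V - {y}). mu p (V - {y}) U) = 1" using mu_sum1[of "V - {y}" p] fin by simp
  moreover have "(\<Sum>U\<in>Pow (V - {y}). mu p (V - {y}) U * (if event_A E x z U then 0 else 1))
     + (\<Sum>U\<in>Pow (V - {y}). mu p (V - {y}) U * (if event_A E x z U then 1 else 0))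
     = (\<Sum>U\<in>Pow (V - {y}). mu p (V - {y}) U)"
    unfolding sum.distrib[symmetric] by (rule sum.cong) auto
  ultimately have "1 - prob_A V E p x y z = (\<Sum>U\<in>Pow (V - {y}). mu p (V - {y}) U * (if event_A E x z U then 0 else 1))"
    by linarith
  also have "\<dots> = (\<Sum>U\<in>Pow (insert z B). mu p (insert z B) U *
        (p * (if event_A E x z U then 0 else 1) + (1 - p) * (if event_A E x z U then 0 else 1)))"
    unfolding V
  proof (rule G2)
    fix U assume "U \<subseteq> insert z B"
    then have "x \<notin> U" using nB xyz by auto
    show "(if event_A E x z (insert x U) then 0 else 1) = (if event_A E x z U then 0 else (1::real))"
    proof -
      have "insert x U - {x, z} = U - {x, z}" by auto
      then have "event_A E x z (insert x U) = event_A E x z U"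
        using event_A_cong[of E x z "insert x U"] event_A_cong[of E x z U] by simp
      then show ?thesis by simp
    qed
  qed (use fB nB xyz in auto)
  also have "\<dots> = (\<Sum>U\<in>Pow (insert z B). mu p (insert z B) U * (if event_A E x z U then 0 else 1))"
    by (simp add: algebra_simps)
  also have "\<dots> = (\<Sum>U\<in>Pow B. mu p B U *
        (p * (if event_A E x z U then 0 else 1) + (1 - p) * (if event_A E x z U then 0 else 1)))"
  proof (rule G2)
    fix U assume "U \<subseteq> B"
    then have "x \<notin> U" "z \<notin> U" using nB by auto
    then show "(if event_A E x z (insert z U) then 0 else 1) = (if event_A E x z U then 0 else (1::real))"
      using event_A_ins(3)[of x U z E] by simp
  qed (use fB nB xyz in auto)
  also have "\<dots> = (\<Sum>U\<in>Pow B. mu p B U * (if event_A E x z U then 0 else 1))"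
    by (simp add: algebra_simps)
  finally show ?thesis unfolding B_def .
qed


context sg
begin

lemma F_sub: "W \<subseteq> V \<Longrightarrow> F W \<subseteq> W \<times> Pow W"
  by (auto simp: F_def)

lemma fin_F: "W \<subseteq> V \<Longrightarrow> finite (F W)"
  using F_sub finite_subset[of W V] finV by (meson finite_Pow_iff finite_SigmaI finite_subset)

lemma N_sub: "nonadm_paths V E p \<epsilon> \<subseteq> V \<times> Pow V"
  using inV by (auto simp: nonadm_paths_def path2_def)

lemma per_path:
  assumes t: "t \<in> nonadm_paths V E p \<epsilon>" and p: "0 < p" "p < 1"
  shows "p ^ 3 * \<epsilon> < (\<Sum>W\<in>Pow V. mu p V W * (if t \<in> F W then 1 else 0))"
proof -
  obtain x y z where tt: "t = (y, {x, z})" and pa: "path2 E x y z" and na: "\<not> admissible V E p \<epsilon> x y z"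
    using t by (auto simp: nonadm_paths_def)
  have pp: "x \<noteq> y" "y \<noteq> z" "x \<noteq> z" "E x y" "E y z" using pa by (auto simp: path2_def)
  have xyz: "x \<in> V" "y \<in> V" "z \<in> V" using pp inV by auto
  have lt: "\<epsilon> < 1 - prob_A V E p x y z" using na by (simp add: admissible_def)
  have mu0: "\<And>W. 0 \<le> mu p V W" using p by (simp add: mu_def)
  have "p ^ 3 * \<epsilon> < p ^ 3 * (1 - prob_A V E p x y z)" using lt p by simp
  also have "\<dots> = (\<Sum>W\<in>Pow V. mu p V W * (if x \<in> W \<and> y \<in> W \<and> z \<in> W \<and> \<not> event_A E x z (W - {y}) then 1 else 0))"
    using triple_prob[OF finV xyz pp(1-3), of p E] one_minus_prob[OF finV xyz pp(1-3), of E p] by simp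
  also have "\<dots> \<le> (\<Sum>W\<in>Pow V. mu p V W * (if t \<in> F W then 1 else 0))"
  proof (rule sum_mono)
    fix W assume "W \<in> Pow V"
    have "x \<in> W \<and> y \<in> W \<and> z \<in> W \<and> \<not> event_A E x z (W - {y}) \<Longrightarrow> t \<in> F W"
      unfolding tt F_def using pa by blast
    then show "mu p V W * (if x \<in> W \<and> y \<in> W \<and> z \<in> W \<and> \<not> event_A E x z (W - {y}) then 1 else 0)
        \<le> mu p V W * (if t \<in> F W then 1 else 0)" using mu0[of W] by auto
  qed
  finally show ?thesis .
qed

lemma deg_pos: "t \<in> nonadm_paths V E p \<epsilon> \<Longrightarrow> 0 < (\<lambda>(y, _). 1 / real (degree V E y)) t"
proof -
  assume t: "t \<in> nonadm_paths V E p \<epsilon>"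
  obtain x y z where tt: "t = (y, {x, z})" and pa: "path2 E x y z"
    using t by (auto simp: nonadm_paths_def)
  have pp: "x \<noteq> y" "y \<noteq> z" "x \<noteq> z" "E x y" "E y z" using pa by (auto simp: path2_def)
  have "2 \<le> degree V E y" using deg_ge2[of x z y] pp inV symE by blast
  then show ?thesis unfolding tt by simp
qed

lemma inner_bound:
  assumes W: "W \<subseteq> V"
  shows "(\<Sum>t\<in>nonadm_paths V E p \<epsilon>. (\<lambda>(y, _). 1 / real (degree V E y)) t * (if t \<in> F W then 1 else 0))
     \<le> 3 / 2 * real (card W)"
proof -
  let ?f = "(\<lambda>(y, _). 1 / real (degree V E y)) :: 'a \<times> 'a set \<Rightarrow> real"
  let ?N = "nonadm_paths V E p \<epsilon>"
  have fN: "finite ?N" using N_sub finV by (meson finite_Pow_iff finite_SigmaI finite_subset)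
  have "(\<Sum>t\<in>?N. ?f t * (if t \<in> F W then 1 else 0)) = (\<Sum>t\<in>?N. if t \<in> F W then ?f t else 0)"
    by (rule sum.cong) auto
  also have "\<dots> = sum ?f (?N \<inter> F W)" using sum.inter_restrict[OF fN, of ?f "F W"] by simp
  also have "\<dots> \<le> sum ?f (F W)"
    by (rule sum_mono2) (use fin_F[OF W] in auto)
  also have "\<dots> \<le> 3 / 2 * real (card W)" using Q_bound[OF W] .
  finally show ?thesis .
qed

end

theorem lemma3p4:
  fixes V :: "'a set" and E :: "'a \<Rightarrow> 'a \<Rightarrow> bool" and p \<epsilon> :: real
  assumes "simple_graph V E" and "V \<noteq> {}"
    and "0 < p" and "p < 1" and "0 < \<epsilon>" and "\<epsilon> < 1"
  shows "(\<Sum>(y, _)\<in>nonadm_paths V E p \<epsilon>. 1 / real (degree V E y))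
           < 3 * real (card V) / (2 * p^2 * \<epsilon>)"
proof -
  interpret sg V E using assms(1) by unfold_locales
  let ?f = "(\<lambda>(y, _). 1 / real (degree V E y)) :: 'a \<times> 'a set \<Rightarrow> real"
  let ?N = "nonadm_paths V E p \<epsilon>"
  let ?n = "real (card V)"
  have fN: "finite ?N" using N_sub finV by (meson finite_Pow_iff finite_SigmaI finite_subset)
  have n0: "0 < ?n" using assms(2) finV by (simp add: card_gt_0_iff)
  have p0: "0 < p" "p < 1" using assms(3,4) .
  have e0: "0 < \<epsilon>" using assms(5) .
  have rhs0: "0 < 3 * ?n / (2 * p^2 * \<epsilon>)" using n0 p0 e0 by simp
  show ?thesis
  proof (cases "?N = {}")
    case True
    then show ?thesis using rhs0 by simp
  next
    case False
    have mu0: "\<And>W. 0 \<le> mu p V W" using p0 by (simp add: mu_def)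
    have "p ^ 3 * \<epsilon> * sum ?f ?N = (\<Sum>t\<in>?N. ?f t * (p ^ 3 * \<epsilon>))"
      by (simp add: sum_distrib_left algebra_simps)
    also have "\<dots> < (\<Sum>t\<in>?N. ?f t * (\<Sum>W\<in>Pow V. mu p V W * (if t \<in> F W then 1 else 0)))"
    proof (rule sum_strict_mono)
      fix t assume t: "t \<in> ?N"
      show "?f t * (p ^ 3 * \<epsilon>) < ?f t * (\<Sum>W\<in>Pow V. mu p V W * (if t \<in> F W then 1 else 0))"
        using per_path[OF t p0] deg_pos[OF t] by (simp only: mult_less_cancel_left_pos)
    qed (use fN False in auto)
    also have "\<dots> = (\<Sum>W\<in>Pow V. mu p V W * (\<Sum>t\<in>?N. ?f t * (if t \<in> F W then 1 else 0)))"
      by (simp add: sum_distrib_left algebra_simps sum.swap[of _ ?N])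
    also have "\<dots> \<le> (\<Sum>W\<in>Pow V. mu p V W * (3 / 2 * real (card W)))"
    proof (rule sum_mono)
      fix W assume "W \<in> Pow V"
      then have "W \<subseteq> V" by simp
      then show "mu p V W * (\<Sum>t\<in>?N. ?f t * (if t \<in> F W then 1 else 0)) \<le> mu p V W * (3 / 2 * real (card W))"
        by (rule mult_left_mono[OF inner_bound mu0[of W]])
    qed
    also have "\<dots> = 3 / 2 * (\<Sum>W\<in>Pow V. mu p V W * real (card W))"
      by (simp add: sum_distrib_left algebra_simps)
    also have "\<dots> = 3 / 2 * (p * ?n)" using mu_card[OF finV, of p] by simp
    finally have key: "p ^ 3 * \<epsilon> * sum ?f ?N < 3 / 2 * (p * ?n)" .
    have pos: "0 < 2 * p ^ 2 * \<epsilon>" using p0 e0 by simp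
    have "sum ?f ?N * (2 * p ^ 2 * \<epsilon>) < 3 * ?n"
    proof -
      have "p * (sum ?f ?N * (2 * p ^ 2 * \<epsilon>)) = 2 * (p ^ 3 * \<epsilon> * sum ?f ?N)"
        by (simp add: power2_eq_square power3_eq_cube algebra_simps)
      also have "\<dots> < 2 * (3 / 2 * (p * ?n))" using key by simp
      also have "\<dots> = p * (3 * ?n)" by simp
      finally show ?thesis using p0 by (simp add: mult_less_cancel_left_pos)
    qed
    then show ?thesis using pos by (simp add: pos_less_divide_eq)
  qed
qed


end
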